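(* Let $W:\mathcal X\to\mathcal Y$ be a DMC with $|\mathcal Y|>2|\mathcal X|$ and fix any input distribution. Then there exist two distinct output letters $\alpha,\beta\in\mathcal Y$ whose merger yields a channel $Q$ with $$I(W)-I(Q)\le \mu(|\mathcal X|)\,|\mathcal Y|^{-\frac{|\mathcal X|+1}{|\mathcal X|-1}},$$ where $\mu(n)=\frac{2}{n-1}\nu(n)$.
   Context: $\mathcal X,\mathcal Y$ are finite disjoint sets with $|\mathcal X|\ge 2$; $W:\mathcal X\to\mathcal Y$ is a discrete memoryless channel with transition probabilities $W(y|x)$. An input distribution $\pi(x)>0$ is fixed and output probabilities $\pi(y)=\sum_x\pi(x)W(y|x)$ are assumed positive. $I(\cdot)$ denotes input–output mutual information (natural log) under this input distribution. Merging two distinct output letters $\alpha,\beta$ produces the channel $Q$ with output alphabet $(\mathcal Y\setminus\{\alpha,\beta\})\cup\{\gamma\}$, $Q(\gamma|x)=W(\alpha|x)+W(\beta|x)$ and $Q(y|x)=W(y|x)$ otherwise. The constant is $$\nu(n)=\frac{\pi n(n-1)}{2\left(\sqrt{1+\frac{1}{2(n-1)}}-1\right)^2}\left(\frac{2n}{\Gamma\!\left(1+\frac{n-1}{2}\right)}\right)^{\frac{2}{n-1}},$$ with $\pi=3.14159\ldots$ and $\Gamma$ the Gamma function. *)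

theory Defs
  imports "HOL-Analysis.Analysis"
begin

text \<open>A DMC from input alphabet X to output alphabet Y is a function W x y = W(y|x).\<close>
definition is_channel :: "'a set \<Rightarrow> 'b set \<Rightarrow> ('a \<Rightarrow> 'b \<Rightarrow> real) \<Rightarrow> bool" where
  "is_channel X Y W \<longleftrightarrow> (\<forall>x\<in>X. (\<forall>y\<in>Y. W x y \<ge> 0) \<and> (\<Sum>y\<in>Y. W x y) = 1)"

definition out_prob :: "'a set \<Rightarrow> ('a \<Rightarrow> real) \<Rightarrow> ('a \<Rightarrow> 'b \<Rightarrow> real) \<Rightarrow> 'b \<Rightarrow> real" where
  "out_prob X p W y = (\<Sum>x\<in>X. p x * W x y)"

definition mutual_info :: "'a set \<Rightarrow> 'b set \<Rightarrow> ('a \<Rightarrow> real) \<Rightarrow> ('a \<Rightarrow> 'b \<Rightarrow> real) \<Rightarrow> real" where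
  "mutual_info X Y p W =
     (\<Sum>x\<in>X. \<Sum>y\<in>Y. if p x * W x y = 0 then 0
        else p x * W x y * ln (W x y / out_prob X p W y))"

text \<open>Merging letters alpha, beta: new output alphabet is (Y - {alpha,beta}) with Some-tags,
  plus the fresh letter gamma = None.\<close>
definition merged_alphabet :: "'b set \<Rightarrow> 'b \<Rightarrow> 'b \<Rightarrow> 'b option set" where
  "merged_alphabet Y \<alpha> \<beta> = Some ` (Y - {\<alpha>, \<beta>}) \<union> {None}"

definition merge_channel :: "('a \<Rightarrow> 'b \<Rightarrow> real) \<Rightarrow> 'b \<Rightarrow> 'b \<Rightarrow> 'a \<Rightarrow> 'b option \<Rightarrow> real" where
  "merge_channel W \<alpha> \<beta> x z = (case z of None \<Rightarrow> W x \<alpha> + W x \<beta> | Some y \<Rightarrow> W x y)"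

definition nu_const :: "nat \<Rightarrow> real" where
  "nu_const n = pi * real n * (real n - 1) /
      (2 * (sqrt (1 + 1 / (2 * (real n - 1))) - 1)^2)
      * (2 * real n / Gamma (1 + (real n - 1) / 2)) powr (2 / (real n - 1))"

definition mu_const :: "nat \<Rightarrow> real" where
  "mu_const n = 2 / (real n - 1) * nu_const n"

end

theory Submission
  imports Defs
begin

lemma Gamma_half_bound: "Gamma (1 + real k / 2) \<le> ((real k + 2)/2) powr (real k / 2)"
proof (induction k rule: less_induct)
  case (less k)
  show ?case
  proof (cases "k < 2")
    case True
    then consider "k = 0" | "k = 1" by linarith
    then show ?thesis
    proof cases
      case 1 then show ?thesis by simp
    next
      case 2
      have "Gamma (1/2 + 1 :: real) = 1/2 * Gamma (1/2)"
        by (subst Gamma_plus1) (auto dest: nonpos_Ints_nonpos)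
      hence "Gamma (1 + real k / 2) = sqrt pi / 2" using 2 by (simp add: Gamma_one_half_real add.commute)
      also have "\<dots> \<le> sqrt (3/2)"
      proof -
        have "sqrt pi \<le> sqrt 4" using pi_less_4 by (intro real_sqrt_le_mono) simp
        also have "sqrt (4::real) = 2" by (simp add: real_sqrt_eq_iff)
        finally have "sqrt pi / 2 \<le> 1" by simp
        moreover have "1 \<le> sqrt (3/2::real)" by simp
        ultimately show ?thesis by linarith
      qed
      also have "\<dots> = ((real k + 2)/2) powr (real k / 2)" using 2 by (simp add: powr_half_sqrt)
      finally show ?thesis .
    qed
  next
    case False
    then obtain j where kj: "k = j + 2" by (metis add.commute le_Suc_ex not_less)
    have IH: "Gamma (1 + real j / 2) \<le> ((real j + 2)/2) powr (real j / 2)" using less kj by simp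
    have "Gamma (1 + real k / 2) = Gamma ((1 + real j / 2) + 1)" using kj by (simp add: field_simps)
    also have "\<dots> = (1 + real j / 2) * Gamma (1 + real j / 2)"
      by (subst Gamma_plus1) (auto dest: nonpos_Ints_nonpos)
    also have "\<dots> \<le> (1 + real j / 2) * ((real j + 2)/2) powr (real j / 2)"
      using IH by (intro mult_left_mono) auto
    also have "\<dots> = ((real j + 2)/2) powr (real j / 2 + 1)"
    proof -
      have "((real j + 2)/2) powr (real j / 2 + 1) = ((real j + 2)/2) powr (real j / 2) * ((real j + 2)/2)"
        by (simp add: powr_add)
      thus ?thesis by (simp add: algebra_simps add_divide_distrib)
    qed
    also have "\<dots> \<le> ((real k + 2)/2) powr (real k / 2)"
    proof -
      have e: "real k / 2 = real j / 2 + 1" using kj by simp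
      show ?thesis unfolding e using kj by (intro powr_mono2) auto
    qed
    finally show ?thesis .
  qed
qed

lemma alg_sq:
  fixes s t P Q :: real
  assumes "s \<ge> 0" "t \<ge> 0" "P > 0" "Q > 0" "P* s^2 + Q* t^2 > 0"
  shows "(P* s^2*Q - Q* t^2*P)^2 / (P*Q*(P* s^2+Q* t^2)) \<le> 2*(P+Q)*(s-t)^2"
proof -
  have e1: "(P* s^2*Q - Q* t^2*P)^2 = (P*Q)^2 * ((s+t)^2 * (s-t)^2)" by (simp add: power2_eq_square algebra_simps)
  have k: "P*Q*(s+t)^2 \<le> 2*(P+Q)*(P* s^2+Q* t^2)"
  proof -
    have "2*(P+Q)*(P* s^2+Q* t^2) - P*Q*(s+t)^2 = 2*P^2* s^2 + 2*Q^2* t^2 + P*Q*(s-t)^2"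
      by (simp add: power2_eq_square algebra_simps)
    moreover have "2*P^2* s^2 + 2*Q^2* t^2 + P*Q*(s-t)^2 \<ge> 0" using assms by simp
    ultimately show ?thesis by linarith
  qed
  have "(P*Q)^2 * ((s+t)^2 * (s-t)^2) = (P*Q) * ((P*Q*(s+t)^2) * (s-t)^2)" by (simp add: power2_eq_square algebra_simps)
  also have "\<dots> \<le> (P*Q) * ((2*(P+Q)*(P* s^2+Q* t^2)) * (s-t)^2)"
    using k assms by (intro mult_left_mono mult_right_mono) auto
  also have "\<dots> = (2*(P+Q)*(s-t)^2) * (P*Q*(P* s^2+Q* t^2))" by (simp add: algebra_simps)
  finally have "(P* s^2*Q - Q* t^2*P)^2 \<le> (2*(P+Q)*(s-t)^2) * (P*Q*(P* s^2+Q* t^2))" using e1 by simp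
  thus ?thesis using assms by (simp add: divide_le_eq)
qed

lemma key_pos:
  fixes A B P Q :: real
  assumes "A > 0" "B > 0" "P > 0" "Q > 0"
  shows "A*ln(A/P) + B*ln(B/Q) - (A+B)*ln((A+B)/(P+Q)) \<le> (A*Q - B*P)^2/(P*Q*(A+B))"
proof -
  have l1: "ln(A/P) - ln((A+B)/(P+Q)) = ln (A*(P+Q)/(P*(A+B)))"
    using assms by (simp add: ln_div ln_mult)
  have l2: "ln(B/Q) - ln((A+B)/(P+Q)) = ln (B*(P+Q)/(Q*(A+B)))"
    using assms by (simp add: ln_div ln_mult)
  have i1: "ln (A*(P+Q)/(P*(A+B))) \<le> A*(P+Q)/(P*(A+B)) - 1"
    using assms by (intro ln_le_minus_one) simp
  have i2: "ln (B*(P+Q)/(Q*(A+B))) \<le> B*(P+Q)/(Q*(A+B)) - 1"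
    using assms by (intro ln_le_minus_one) simp
  have "A*ln(A/P) + B*ln(B/Q) - (A+B)*ln((A+B)/(P+Q))
      = A*(ln(A/P) - ln((A+B)/(P+Q))) + B*(ln(B/Q) - ln((A+B)/(P+Q)))" by (simp add: algebra_simps)
  also have "\<dots> \<le> A*(A*(P+Q)/(P*(A+B)) - 1) + B*(B*(P+Q)/(Q*(A+B)) - 1)"
    unfolding l1 l2 using i1 i2 assms by (intro add_mono mult_left_mono) auto
  also have "\<dots> = (A*Q - B*P)^2/(P*Q*(A+B))"
  proof -
    have d: "P*(A+B) > 0" "Q*(A+B) > 0" "P*Q*(A+B) > 0" using assms by auto
    have "A*(A*(P+Q)/(P*(A+B)) - 1) + B*(B*(P+Q)/(Q*(A+B)) - 1)
       = (A*A*(P+Q)*Q + B*B*(P+Q)*P - (A+B)*(P*Q*(A+B)))/(P*Q*(A+B))"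
      using d assms by (simp add: divide_simps) (simp add: algebra_simps)
    also have "A*A*(P+Q)*Q + B*B*(P+Q)*P - (A+B)*(P*Q*(A+B)) = (A*Q - B*P)^2"
      by (simp add: algebra_simps power2_eq_square)
    finally show ?thesis .
  qed
  finally show ?thesis .
qed

lemma loss_x:
  fixes c wa wb P Q :: real
  assumes "c > 0" "wa \<ge> 0" "wb \<ge> 0" "P > 0" "Q > 0"
  shows "(if c*wa = 0 then 0 else c*wa*ln(wa/P)) + (if c*wb = 0 then 0 else c*wb*ln(wb/Q))
     - (if c*(wa+wb) = 0 then 0 else c*(wa+wb)*ln((wa+wb)/(P+Q)))
     \<le> 2*(P+Q)*(sqrt(c*wa/P) - sqrt(c*wb/Q))^2"
proof -
  define s where "s = sqrt(c*wa/P)"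
  define t where "t = sqrt(c*wb/Q)"
  have nn: "c*wa/P \<ge> 0" "c*wb/Q \<ge> 0" using assms by (auto intro!: divide_nonneg_pos mult_nonneg_nonneg)
  hence s0: "s \<ge> 0" "t \<ge> 0" unfolding s_def t_def by auto
  have cwa: "c*wa = P* s^2" and cwb: "c*wb = Q* t^2" unfolding s_def t_def using assms nn by auto
  show ?thesis
  proof (cases "wa = 0")
    case wa: True
    show ?thesis
    proof (cases "wb = 0")
      case True
      with wa show ?thesis by simp
    next
      case False
      hence wb: "wb > 0" using assms by simp
      have "c*wb*ln(wb/Q) - c*wb*ln(wb/(P+Q)) = c*wb*ln((P+Q)/Q)"
        using assms wb by (simp add: ln_div algebra_simps)
      also have "\<dots> \<le> c*wb*((P+Q)/Q - 1)"
        using assms wb by (intro mult_left_mono ln_le_minus_one) auto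
      also have "\<dots> = c*wb*P/Q" using assms by (simp add: field_simps)
      also have "\<dots> \<le> 2*(P+Q)*(c*wb/Q)" using assms wb by (simp add: field_simps)
      also have "\<dots> = 2*(P+Q)*(s - t)^2" using wa cwb assms unfolding s_def by simp
      finally show ?thesis using wa wb assms by (simp add: s_def t_def)
    qed
  next
    case False
    hence wa: "wa > 0" using assms by simp
    show ?thesis
    proof (cases "wb = 0")
      case wb: True
      have "c*wa*ln(wa/P) - c*wa*ln(wa/(P+Q)) = c*wa*ln((P+Q)/P)"
        using assms wa by (simp add: ln_div algebra_simps)
      also have "\<dots> \<le> c*wa*((P+Q)/P - 1)"
        using assms wa by (intro mult_left_mono ln_le_minus_one) auto
      also have "\<dots> = c*wa*Q/P" using assms by (simp add: field_simps)
      also have "\<dots> \<le> 2*(P+Q)*(c*wa/P)" using assms wa by (simp add: field_simps)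
      also have "\<dots> = 2*(P+Q)*(s - t)^2" using wb cwa assms unfolding t_def by simp
      finally show ?thesis using wa wb assms by (simp add: s_def t_def)
    next
      case False
      hence wb: "wb > 0" using assms by simp
      have "c*wa*ln(wa/P) + c*wb*ln(wb/Q) - c*(wa+wb)*ln((wa+wb)/(P+Q))
          = c*(wa*ln(wa/P) + wb*ln(wb/Q) - (wa+wb)*ln((wa+wb)/(P+Q)))" by (simp add: algebra_simps)
      also have "\<dots> \<le> c*((wa*Q - wb*P)^2/(P*Q*(wa+wb)))"
        using key_pos[of wa wb P Q] assms wa wb by (intro mult_left_mono) auto
      also have "\<dots> = (c^2*(wa*Q - wb*P)^2)/(c*(P*Q*(wa+wb)))"
        using assms by (simp add: power2_eq_square)
      also have "\<dots> = (c*wa*Q - c*wb*P)^2/(P*Q*(c*wa+c*wb))"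
        by (simp add: power2_eq_square algebra_simps)
      also have "\<dots> = (P* s^2*Q - Q* t^2*P)^2 / (P*Q*(P* s^2+Q* t^2))" unfolding cwa cwb ..
      also have "\<dots> \<le> 2*(P+Q)*(s-t)^2"
        using alg_sq[OF s0 assms(4,5)] cwa cwb assms wa wb
        by (metis add_pos_pos mult_pos_pos)
      finally show ?thesis using wa wb assms by (simp add: s_def t_def)
    qed
  qed
qed

lemma cell_close:
  fixes a b :: real and N :: nat
  assumes "0 \<le> a" "a \<le> 1" "0 \<le> b" "b \<le> 1" "N \<ge> 1"
    and eq: "min (nat \<lfloor>real N * a\<rfloor>) (N - 1) = min (nat \<lfloor>real N * b\<rfloor>) (N - 1)"
  shows "\<bar>a - b\<bar> \<le> 1 / real N"
proof -
  have Np: "real N > 0" using assms by simp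
  have fa: "real_of_int \<lfloor>real N * a\<rfloor> \<le> real N * a" "real N * a < real_of_int \<lfloor>real N * a\<rfloor> + 1"
    by linarith+
  have fb: "real_of_int \<lfloor>real N * b\<rfloor> \<le> real N * b" "real N * b < real_of_int \<lfloor>real N * b\<rfloor> + 1"
    by linarith+
  have ga: "\<lfloor>real N * a\<rfloor> \<ge> 0" "\<lfloor>real N * b\<rfloor> \<ge> 0" using assms by auto
  have Na: "real N * a \<le> real N" "real N * b \<le> real N" using assms by auto
  have "\<bar>real N * a - real N * b\<bar> \<le> 1"
  proof (cases "nat \<lfloor>real N * a\<rfloor> < N - 1 \<or> nat \<lfloor>real N * b\<rfloor> < N - 1")
    case True
    hence "nat \<lfloor>real N * a\<rfloor> = nat \<lfloor>real N * b\<rfloor>" using eq by (auto simp: min_def split: if_splits)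
    hence "\<lfloor>real N * a\<rfloor> = \<lfloor>real N * b\<rfloor>" using ga by (metis nat_0_le)
    then show ?thesis using fa fb by linarith
  next
    case False
    hence h: "N - 1 \<le> nat \<lfloor>real N * a\<rfloor>" "N - 1 \<le> nat \<lfloor>real N * b\<rfloor>" by auto
    have "int (N - 1) \<le> \<lfloor>real N * a\<rfloor>" "int (N - 1) \<le> \<lfloor>real N * b\<rfloor>"
      using h ga by (simp_all add: le_nat_iff)
    hence "\<lfloor>real N * a\<rfloor> \<ge> int N - 1" "\<lfloor>real N * b\<rfloor> \<ge> int N - 1" using assms by auto
    hence "real N * a \<ge> real N - 1" "real N * b \<ge> real N - 1" using fa fb by linarith+
    then show ?thesis using Na by linarith
  qed
  moreover have "\<bar>real N * a - real N * b\<bar> = real N * \<bar>a - b\<bar>"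
    by (simp add: abs_mult right_diff_distrib[symmetric])
  ultimately have "real N * \<bar>a - b\<bar> \<le> 1" by simp
  thus ?thesis using Np by (simp add: field_simps)
qed

lemma abs_sq_diff:
  fixes a b :: real assumes "a \<ge> 0" "b \<ge> 0"
  shows "\<bar>a^2 - b^2\<bar> = \<bar>a - b\<bar> * (a + b)"
proof -
  have "a^2 - b^2 = (a-b)*(a+b)" by (simp add: power2_eq_square algebra_simps)
  hence "\<bar>a^2 - b^2\<bar> = \<bar>a-b\<bar> * \<bar>a+b\<bar>" by (simp add: abs_mult)
  thus ?thesis using assms by simp
qed

lemma close_pair:
  fixes X :: "'a set" and u v :: "'a \<Rightarrow> real" and \<delta> :: real
  assumes fX: "finite X" and j: "j \<in> X" and nn: "\<forall>x\<in>X. u x \<ge> 0 \<and> v x \<ge> 0"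
    and su: "(\<Sum>x\<in>X. (u x)^2) = 1" and sv: "(\<Sum>x\<in>X. (v x)^2) = 1"
    and mx: "\<forall>i\<in>X. u i \<le> u j \<and> v i \<le> v j"
    and cl: "\<forall>i\<in>X-{j}. \<bar>u i - v i\<bar> \<le> \<delta>" and d0: "\<delta> \<ge> 0"
  shows "(\<Sum>x\<in>X. (u x - v x)^2) \<le> real (card X) * (real (card X) - 1) * \<delta>^2"
proof -
  let ?R = "X - {j}"
  have "card X \<ge> 1" using fX j by (metis card_0_eq empty_iff less_one not_le)
  hence cR: "real (card ?R) = real (card X) - 1" using fX j by (simp add: card_Diff_singleton of_nat_diff)
  have S: "(\<Sum>i\<in>?R. \<bar>u i - v i\<bar>) \<le> real (card ?R) * \<delta>"
    using sum_mono[of ?R "\<lambda>i. \<bar>u i - v i\<bar>" "\<lambda>_. \<delta>"] cl by simp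
  have uj: "u j > 0"
  proof (rule ccontr)
    assume "\<not> u j > 0"
    hence "\<forall>x\<in>X. u x = 0" using nn mx j by force
    hence "(\<Sum>x\<in>X. (u x)^2) = 0" by simp
    thus False using su by simp
  qed
  have vj: "v j \<ge> 0" using nn j by auto
  have e1: "(u j)^2 - (v j)^2 = (\<Sum>i\<in>?R. (v i)^2 - (u i)^2)"
  proof -
    have "(\<Sum>x\<in>X. (u x)^2) = (u j)^2 + (\<Sum>i\<in>?R. (u i)^2)" using fX j by (simp add: sum.remove)
    moreover have "(\<Sum>x\<in>X. (v x)^2) = (v j)^2 + (\<Sum>i\<in>?R. (v i)^2)" using fX j by (simp add: sum.remove)
    ultimately show ?thesis using su sv by (simp add: sum_subtractf)
  qed
  have "\<bar>u j - v j\<bar> * (u j + v j) = \<bar>(u j)^2 - (v j)^2\<bar>"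
    using uj vj abs_sq_diff[of "u j" "v j"] by simp
  also have "\<dots> \<le> (\<Sum>i\<in>?R. \<bar>(v i)^2 - (u i)^2\<bar>)" unfolding e1 by (rule sum_abs)
  also have "\<dots> \<le> (\<Sum>i\<in>?R. \<bar>u i - v i\<bar> * (u j + v j))"
  proof (rule sum_mono)
    fix i assume i: "i \<in> ?R"
    have "\<bar>(v i)^2 - (u i)^2\<bar> = \<bar>u i - v i\<bar> * (u i + v i)"
      using nn i abs_sq_diff[of "v i" "u i"] by (simp add: abs_minus_commute add.commute)
    also have "\<dots> \<le> \<bar>u i - v i\<bar> * (u j + v j)" using mx i by (intro mult_left_mono) auto
    finally show "\<bar>(v i)^2 - (u i)^2\<bar> \<le> \<bar>u i - v i\<bar> * (u j + v j)" .
  qed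
  also have "\<dots> = (\<Sum>i\<in>?R. \<bar>u i - v i\<bar>) * (u j + v j)" by (simp add: sum_distrib_right)
  finally have "\<bar>u j - v j\<bar> * (u j + v j) \<le> (\<Sum>i\<in>?R. \<bar>u i - v i\<bar>) * (u j + v j)" .
  hence bj: "\<bar>u j - v j\<bar> \<le> real (card ?R) * \<delta>" using uj vj S by (simp add: mult_le_cancel_right)
  have "(\<Sum>x\<in>X. (u x - v x)^2) = (u j - v j)^2 + (\<Sum>i\<in>?R. (u i - v i)^2)" using fX j by (simp add: sum.remove)
  also have "\<dots> \<le> (real (card ?R) * \<delta>)^2 + (\<Sum>i\<in>?R. \<delta>^2)"
  proof (intro add_mono sum_mono)
    have "\<bar>u j - v j\<bar>^2 \<le> (real (card ?R) * \<delta>)^2" using bj by (intro power_mono) auto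
    thus "(u j - v j)^2 \<le> (real (card ?R) * \<delta>)^2" by simp
  next
    fix i assume "i \<in> ?R"
    hence "\<bar>u i - v i\<bar>^2 \<le> \<delta>^2" using cl by (intro power_mono) auto
    thus "(u i - v i)^2 \<le> \<delta>^2" by simp
  qed
  also have "\<dots> = real (card X) * (real (card X) - 1) * \<delta>^2"
    unfolding sum_constant cR by (simp add: power2_eq_square algebra_simps)
  finally show ?thesis .
qed

lemma core_ineq:
  fixes nr S Gp :: real
  assumes n2: "nr \<ge> 2" and S: "0 < S" "S \<le> 1/(4*(nr-1))" and G: "0 < Gp" "Gp \<le> (nr+1)/2"
  shows "32*nr*(nr-1) \<le> pi*nr/(S^2*Gp)"
proof -
  have d: "nr - 1 \<ge> 1" using n2 by simp
  have "S^2 \<le> (1/(4*(nr-1)))^2" using S by (intro power_mono) auto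
  hence "S^2*Gp \<le> (1/(4*(nr-1)))^2 * ((nr+1)/2)" using G S by (intro mult_mono) auto
  also have "\<dots> = (nr+1)/(32*(nr-1)^2)" by (simp add: power2_eq_square field_simps)
  finally have sg: "S^2*Gp \<le> (nr+1)/(32*(nr-1)^2)" .
  have pos: "S^2*Gp > 0" using S G by simp
  have "pi*(nr-1) \<ge> 3*(nr-1)" using pi_gt3 d by (intro mult_right_mono) auto
  hence pn: "nr + 1 \<le> pi*(nr-1)" using n2 by (smt (verit))
  have "(nr+1)/(nr-1) \<le> pi" using pn d by (simp add: divide_le_eq)
  hence "nr*((nr+1)/(nr-1)) \<le> nr*pi" using n2 by (intro mult_left_mono) auto
  moreover have "32*nr*(nr-1) * ((nr+1)/(32*(nr-1)^2)) = nr*((nr+1)/(nr-1))"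
  proof -
    define x where "x = nr - 1"
    have x0: "x \<noteq> 0" using d unfolding x_def by simp
    have "nr = x + 1" unfolding x_def by simp
    thus ?thesis unfolding x_def[symmetric] using x0 by (simp add: power2_eq_square field_simps)
  qed
  ultimately have "32*nr*(nr-1) * ((nr+1)/(32*(nr-1)^2)) \<le> pi*nr" by (simp add: mult.commute)
  hence "32*nr*(nr-1) * (S^2*Gp) \<le> pi*nr"
    using sg n2 by (smt (verit) mult_left_mono zero_le_mult_iff)
  thus ?thesis using pos by (simp add: le_divide_eq)
qed

lemma numeric:
  fixes n m N :: nat
  assumes n2: "n \<ge> 2" and m0: "m > 0" and N1: "N \<ge> 1"
    and mb: "real m < 2 * real n * (real N + 1)^(n-1)"
  shows "8 * real n * (real n - 1) / (real m * (real N)^2)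
     \<le> mu_const n * real m powr (- ((real n + 1) / (real n - 1)))"
proof -
  define nr where "nr = real n"
  define mr where "mr = real m"
  define e where "e = 2/(nr-1)"
  have nr2: "nr \<ge> 2" using n2 unfolding nr_def by simp
  have mr0: "mr > 0" using m0 unfolding mr_def by simp
  have e0: "e > 0" unfolding e_def using nr2 by simp
  define S where "S = sqrt (1 + 1 / (2 * (nr - 1))) - 1"
  define G where "G = Gamma (1 + (nr - 1) / 2)"
  have "1 + (nr - 1) / 2 > 0" using nr2 by (simp add: field_simps)
  hence G0: "G > 0" unfolding G_def by (rule Gamma_real_pos)
  have S0: "S > 0" unfolding S_def using nr2 by simp
  have S1: "S \<le> 1/(4*(nr-1))"
  proof -
    let ?t = "1 / (2 * (nr - 1))"
    have t0: "?t \<ge> 0" using nr2 by simp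
    have gen: "(1 + t/2)^2 \<ge> 1 + t" for t :: real
    proof -
      have "(1 + t/2)^2 = 1 + t + (t/2)^2" by (simp add: power2_eq_square algebra_simps)
      thus ?thesis by (smt (verit) zero_le_power2)
    qed
    have "(1 + ?t/2)^2 \<ge> 1 + ?t" by (rule gen)
    hence "sqrt (1 + ?t) \<le> 1 + ?t/2" using t0 by (intro real_le_lsqrt) auto
    thus ?thesis unfolding S_def by simp
  qed
  have Gb: "G powr e \<le> (nr+1)/2"
  proof -
    have rn: "real (n - 1) = nr - 1" using n2 unfolding nr_def by simp
    have "G \<le> ((nr - 1 + 2)/2) powr ((nr - 1) / 2)" using Gamma_half_bound[of "n-1"] unfolding G_def rn .
    hence "G powr e \<le> (((nr+1)/2) powr ((nr - 1) / 2)) powr e" using G0 e0 by (intro powr_mono2) (auto simp: add.commute)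
    also have "\<dots> = ((nr+1)/2) powr ((nr - 1) / 2 * e)" by (simp add: powr_powr)
    also have "(nr - 1) / 2 * e = 1" unfolding e_def using nr2 by simp
    finally show ?thesis using nr2 by simp
  qed
  have mu: "mu_const n = pi*nr/(S^2 * G powr e) * (2*nr) powr e"
  proof -
    have "mu_const n = 2/(nr-1) * (pi * nr * (nr - 1) / (2 * S^2) * (2 * nr / G) powr e)"
      unfolding mu_const_def nu_const_def nr_def[symmetric] S_def[symmetric] G_def[symmetric] e_def ..
    also have "(2 * nr / G) powr e = (2*nr) powr e / G powr e" using G0 nr2 by (simp add: powr_divide)
    finally have eq: "mu_const n = 2/(nr-1) * (pi * nr * (nr - 1) / (2 * S^2) * ((2*nr) powr e / G powr e))" .
    have gen: "2/x * (pi * nr * x / (2 * S^2) * (T / Gp)) = pi*nr/(S^2 * Gp) * T" if "x \<noteq> 0" for x T Gp :: real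
      using that by (simp add: field_simps)
    show ?thesis unfolding eq using nr2 by (intro gen) simp
  qed
  have Ne: "(real N + 1) \<ge> (mr/(2*nr)) powr (1/(nr-1))"
  proof -
    have "mr/(2*nr) < (real N + 1)^(n-1)" using mb nr2 unfolding mr_def nr_def by (simp add: field_simps)
    also have "(real N + 1)^(n-1) = (real N + 1) powr (nr - 1)"
      using n2 unfolding nr_def by (simp add: powr_realpow[symmetric] of_nat_diff)
    finally have "(mr/(2*nr)) powr (1/(nr-1)) \<le> ((real N + 1) powr (nr - 1)) powr (1/(nr-1))"
      using mr0 nr2 by (intro powr_mono2) auto
    also have "\<dots> = real N + 1" using nr2 by (simp add: powr_powr)
    finally show ?thesis .
  qed
  define q where "q = (mr/(2*nr)) powr (1/(nr-1))"
  have q0: "q > 0" unfolding q_def using mr0 nr2 by simp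
  have q2: "q^2 = mr powr e / (2*nr) powr e"
  proof -
    have "q^2 = q powr 2" using q0 by (simp add: powr_realpow[of q 2, simplified])
    also have "\<dots> = (mr/(2*nr)) powr e" unfolding q_def e_def by (simp add: powr_powr)
    also have "\<dots> = mr powr e / (2*nr) powr e" using mr0 nr2 by (simp add: powr_divide)
    finally show ?thesis .
  qed
  have inv: "1/(real N)^2 \<le> 4 * (2*nr) powr e / mr powr e"
  proof -
    have x1: "real N \<ge> 1" using N1 by simp
    have "0 \<le> (3*real N + 1)*(real N - 1)" using x1 by simp
    hence "(real N + 1)^2 \<le> 4 * (real N)^2" by (simp add: power2_eq_square algebra_simps)
    hence "1/(real N)^2 \<le> 4 / (real N + 1)^2" using N1 by (simp add: field_simps)
    also have "\<dots> \<le> 4 / q^2" using Ne q0 unfolding q_def[symmetric]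
      by (intro divide_left_mono power_mono mult_pos_pos) auto
    also have "\<dots> = 4 * (2*nr) powr e / mr powr e" unfolding q2 using nr2 mr0 by simp
    finally show ?thesis .
  qed
  have mp: "mr powr (- ((nr + 1) / (nr - 1))) = 1 / (mr * mr powr e)"
  proof -
    have "- ((nr + 1) / (nr - 1)) = - (1 + e)" unfolding e_def using nr2 by (simp add: field_simps)
    hence "mr powr (- ((nr + 1) / (nr - 1))) = mr powr (- (1 + e))" by simp
    also have "\<dots> = inverse (mr powr (1 + e))" by (rule powr_minus)
    also have "\<dots> = 1 / (mr * mr powr e)" using mr0 by (simp add: powr_add divide_inverse)
    finally show ?thesis .
  qed
  have ci: "32*nr*(nr-1) \<le> pi*nr/(S^2*G powr e)"
    using core_ineq[OF nr2 S0 S1 _ Gb] G0 by simp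
  have Tp: "(2*nr) powr e > 0" "mr powr e > 0" using nr2 mr0 by auto
  have "8 * nr * (nr - 1) / (mr * (real N)^2) = (8 * nr * (nr - 1) / mr) * (1/(real N)^2)" by simp
  also have "\<dots> \<le> (8 * nr * (nr - 1) / mr) * (4 * (2*nr) powr e / mr powr e)"
    using inv nr2 mr0 by (intro mult_left_mono) auto
  also have "\<dots> = (32*nr*(nr-1)) * ((2*nr) powr e / (mr * mr powr e))" by (simp add: field_simps)
  also have "\<dots> \<le> (pi*nr/(S^2*G powr e)) * ((2*nr) powr e / (mr * mr powr e))"
    using ci Tp mr0 by (intro mult_right_mono) auto
  also have "\<dots> = mu_const n * mr powr (- ((nr + 1) / (nr - 1)))" unfolding mu mp by simp
  finally show ?thesis unfolding nr_def mr_def .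
qed

lemma mi_diff:
  fixes X :: "'a set" and Y :: "'b set" and W :: "'a \<Rightarrow> 'b \<Rightarrow> real" and p :: "'a \<Rightarrow> real"
  assumes fX: "finite X" and fY: "finite Y" and ch: "is_channel X Y W"
    and pp: "\<forall>x\<in>X. p x > 0" and op: "\<forall>y\<in>Y. out_prob X p W y > 0"
    and ab: "\<alpha> \<in> Y" "\<beta> \<in> Y" "\<alpha> \<noteq> \<beta>"
  shows "mutual_info X Y p W - mutual_info X (merged_alphabet Y \<alpha> \<beta>) p (merge_channel W \<alpha> \<beta>)
     \<le> 2*(out_prob X p W \<alpha> + out_prob X p W \<beta>) *
        (\<Sum>x\<in>X. (sqrt (p x * W x \<alpha> / out_prob X p W \<alpha>) - sqrt (p x * W x \<beta> / out_prob X p W \<beta>))^2)"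
proof -
  let ?o = "out_prob X p W"
  let ?V = "merge_channel W \<alpha> \<beta>"
  let ?o' = "out_prob X p ?V"
  define t where "t x y = (if p x * W x y = 0 then 0 else p x * W x y * ln (W x y / ?o y))" for x y
  define t' where "t' x z = (if p x * ?V x z = 0 then 0 else p x * ?V x z * ln (?V x z / ?o' z))" for x z
  have o'S: "?o' (Some y) = ?o y" for y by (simp add: out_prob_def merge_channel_def)
  have o'N: "?o' None = ?o \<alpha> + ?o \<beta>" by (simp add: out_prob_def merge_channel_def sum.distrib algebra_simps)
  let ?R = "Y - {\<alpha>, \<beta>}"
  have sumY: "(\<Sum>y\<in>Y. t x y) = (\<Sum>y\<in>?R. t x y) + t x \<alpha> + t x \<beta>" for x
  proof -
    have "Y = insert \<alpha> (insert \<beta> ?R)" using ab by auto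
    hence "(\<Sum>y\<in>Y. t x y) = (\<Sum>y\<in>insert \<alpha> (insert \<beta> ?R). t x y)" by simp
    also have "\<dots> = t x \<alpha> + (t x \<beta> + (\<Sum>y\<in>?R. t x y))" using fY ab by simp
    finally show ?thesis by simp
  qed
  have sumY': "(\<Sum>z\<in>merged_alphabet Y \<alpha> \<beta>. t' x z) = (\<Sum>y\<in>?R. t x y) + t' x None" for x
  proof -
    have "(\<Sum>z\<in>merged_alphabet Y \<alpha> \<beta>. t' x z) = (\<Sum>z\<in>Some ` ?R. t' x z) + t' x None"
      unfolding merged_alphabet_def using fY by (subst sum.union_disjoint) auto
    also have "(\<Sum>z\<in>Some ` ?R. t' x z) = (\<Sum>y\<in>?R. t' x (Some y))" by (simp add: sum.reindex)
    also have "\<dots> = (\<Sum>y\<in>?R. t x y)"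
    proof -
      have mcS: "?V x (Some y) = W x y" for y by (simp add: merge_channel_def)
      show ?thesis unfolding t_def t'_def mcS o'S ..
    qed
    finally show ?thesis .
  qed
  have I1: "mutual_info X Y p W = (\<Sum>x\<in>X. \<Sum>y\<in>Y. t x y)" unfolding mutual_info_def t_def ..
  have I2: "mutual_info X (merged_alphabet Y \<alpha> \<beta>) p ?V = (\<Sum>x\<in>X. \<Sum>z\<in>merged_alphabet Y \<alpha> \<beta>. t' x z)"
    unfolding mutual_info_def t'_def ..
  have "mutual_info X Y p W - mutual_info X (merged_alphabet Y \<alpha> \<beta>) p ?V
     = (\<Sum>x\<in>X. t x \<alpha> + t x \<beta> - t' x None)"
    unfolding I1 I2 sumY sumY' by (simp add: sum_subtractf[symmetric] algebra_simps)
  also have "\<dots> \<le> (\<Sum>x\<in>X. 2*(?o \<alpha> + ?o \<beta>) * (sqrt (p x * W x \<alpha> / ?o \<alpha>) - sqrt (p x * W x \<beta> / ?o \<beta>))^2)"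
  proof (rule sum_mono)
    fix x assume x: "x \<in> X"
    have w: "W x \<alpha> \<ge> 0" "W x \<beta> \<ge> 0" using ch x ab unfolding is_channel_def by auto
    have tN: "t' x None = (if p x * (W x \<alpha> + W x \<beta>) = 0 then 0
        else p x * (W x \<alpha> + W x \<beta>) * ln ((W x \<alpha> + W x \<beta>) / (?o \<alpha> + ?o \<beta>)))"
      unfolding t'_def o'N by (simp add: merge_channel_def)
    show "t x \<alpha> + t x \<beta> - t' x None \<le> 2*(?o \<alpha> + ?o \<beta>) * (sqrt (p x * W x \<alpha> / ?o \<alpha>) - sqrt (p x * W x \<beta> / ?o \<beta>))^2"
      unfolding tN t_def using loss_x[of "p x" "W x \<alpha>" "W x \<beta>" "?o \<alpha>" "?o \<beta>"] pp x w op ab by auto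
  qed
  also have "\<dots> = 2*(?o \<alpha> + ?o \<beta>) * (\<Sum>x\<in>X. (sqrt (p x * W x \<alpha> / ?o \<alpha>) - sqrt (p x * W x \<beta> / ?o \<beta>))^2)"
    by (simp add: sum_distrib_left)
  finally show ?thesis .
qed

lemma pigeon:
  fixes X :: "'a set" and L :: "'b set" and u :: "'b \<Rightarrow> 'a \<Rightarrow> real" and N :: nat
  assumes fX: "finite X" and fL: "finite L" and N1: "N \<ge> 1"
    and cL: "card X * N^(card X - 1) < card L"
    and nn: "\<forall>y\<in>L. \<forall>x\<in>X. u y x \<ge> 0" and sq: "\<forall>y\<in>L. (\<Sum>x\<in>X. (u y x)^2) = 1"
  shows "\<exists>\<alpha>\<in>L. \<exists>\<beta>\<in>L. \<alpha> \<noteq> \<beta> \<and>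
    (\<Sum>x\<in>X. (u \<alpha> x - u \<beta> x)^2) \<le> real (card X) * (real (card X) - 1) * (1 / real N)^2"
proof -
  have "L \<noteq> {}" using cL by auto
  then obtain y0 where "y0 \<in> L" by auto
  hence Xne: "X \<noteq> {}" using sq by force
  have exj: "\<exists>j. j \<in> X \<and> (\<forall>i\<in>X. u y i \<le> u y j)" for y
  proof -
    have "Max (u y ` X) \<in> u y ` X" using fX Xne by (intro Max_in) auto
    then obtain j where "j \<in> X" "u y j = Max (u y ` X)" by auto
    moreover have "\<forall>i\<in>X. u y i \<le> Max (u y ` X)" using fX by auto
    ultimately show ?thesis by auto
  qed
  define jf where "jf y = (SOME j. j \<in> X \<and> (\<forall>i\<in>X. u y i \<le> u y j))" for y
  have jf: "jf y \<in> X" "\<forall>i\<in>X. u y i \<le> u y (jf y)" for y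
    unfolding jf_def using someI_ex[OF exj[of y]] by auto
  define cell where "cell y i = min (nat \<lfloor>real N * u y i\<rfloor>) (N - 1)" for y i
  define key where "key y = (jf y, restrict (\<lambda>i. if i = jf y then 0 else cell y i) X)" for y
  define K where "K = (SIGMA j:X. PiE X (\<lambda>i. if i = j then {0} else {0..<N}))"
  have sub: "key ` L \<subseteq> K"
  proof
    fix z assume "z \<in> key ` L"
    then obtain y where z: "z = key y" by auto
    have "cell y i < N" for i unfolding cell_def using N1 by auto
    thus "z \<in> K" unfolding z key_def K_def using jf(1)[of y] by (auto simp: restrict_PiE_iff)
  qed
  have cK: "card K = card X * N^(card X - 1)"
  proof -
    have "card (PiE X (\<lambda>i. if i = j then {0} else {0..<N})) = N^(card X - 1)" if j: "j \<in> X" for j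
    proof -
      have "card (PiE X (\<lambda>i. if i = j then {0} else {0..<N})) = (\<Prod>i\<in>X. card (if i = j then {0} else {0..<N}))"
        using fX by (rule card_PiE)
      also have "\<dots> = card (if j = j then {0} else {0..<N}) * (\<Prod>i\<in>X-{j}. card (if i = j then {0} else {0..<N}))"
        using fX j by (simp add: prod.remove)
      also have "(\<Prod>i\<in>X-{j}. card (if i = j then {0} else {0..<N})) = (\<Prod>i\<in>X-{j}. N)"
        by (rule prod.cong) auto
      also have "\<dots> = N^(card X - 1)" using fX j by (simp add: card_Diff_singleton)
      finally show ?thesis by simp
    qed
    hence "card K = (\<Sum>j\<in>X. N^(card X - 1))" unfolding K_def using fX
      by (subst card_SigmaI) (auto intro!: finite_PiE)
    thus ?thesis by simp
  qed
  have "finite K" unfolding K_def using fX by (auto intro!: finite_PiE)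
  hence "card (key ` L) \<le> card K" using sub by (rule card_mono)
  hence "card (key ` L) < card L" using cK cL by simp
  hence "\<not> inj_on key L" by (rule pigeonhole)
  then obtain \<alpha> \<beta> where ab: "\<alpha> \<in> L" "\<beta> \<in> L" "\<alpha> \<noteq> \<beta>" "key \<alpha> = key \<beta>"
    unfolding inj_on_def by auto
  define j where "j = jf \<alpha>"
  have jb: "jf \<beta> = j" using ab(4) unfolding key_def j_def by simp
  have rr: "restrict (\<lambda>i. if i = j then 0 else cell \<alpha> i) X = restrict (\<lambda>i. if i = j then 0 else cell \<beta> i) X"
    using ab(4) unfolding key_def j_def jb[unfolded j_def] by simp
  have ce: "cell \<alpha> i = cell \<beta> i" if "i \<in> X - {j}" for i
    using fun_cong[OF rr, of i] that by simp
  have le1: "u y x \<le> 1" if "y \<in> L" "x \<in> X" for y x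
  proof -
    have "(u y x)^2 \<le> (\<Sum>x\<in>X. (u y x)^2)" using that fX by (intro member_le_sum) auto
    hence "(u y x)^2 \<le> 1^2" using sq that by simp
    thus ?thesis by (rule power2_le_imp_le) simp
  qed
  have cl: "\<forall>i\<in>X-{j}. \<bar>u \<alpha> i - u \<beta> i\<bar> \<le> 1 / real N"
  proof
    fix i assume i: "i \<in> X - {j}"
    show "\<bar>u \<alpha> i - u \<beta> i\<bar> \<le> 1 / real N"
      using cell_close[of "u \<alpha> i" "u \<beta> i" N] ce[OF i] i ab nn le1 N1 unfolding cell_def by auto
  qed
  have "(\<Sum>x\<in>X. (u \<alpha> x - u \<beta> x)^2) \<le> real (card X) * (real (card X) - 1) * (1 / real N)^2"
    apply (rule close_pair[OF fX jf(1)[of \<alpha>, folded j_def]])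
    using nn ab sq jf(2)[of \<alpha>] jf(2)[of \<beta>] cl by (auto simp: j_def jb[unfolded j_def])
  thus ?thesis using ab by blast
qed

theorem theorem2:
  fixes X :: "'a set" and Y :: "'b set"
    and W :: "'a \<Rightarrow> 'b \<Rightarrow> real" and p :: "'a \<Rightarrow> real"
  assumes "finite X" and "finite Y"
    and "card X \<ge> 2"
    and "card Y > 2 * card X"
    and "is_channel X Y W"
    and "\<forall>x\<in>X. p x > 0" and "(\<Sum>x\<in>X. p x) = 1"
    and "\<forall>y\<in>Y. out_prob X p W y > 0"
  shows "\<exists>\<alpha>\<in>Y. \<exists>\<beta>\<in>Y. \<alpha> \<noteq> \<beta> \<and>
     mutual_info X Y p W
       - mutual_info X (merged_alphabet Y \<alpha> \<beta>) p (merge_channel W \<alpha> \<beta>)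
     \<le> mu_const (card X) * real (card Y) powr (- ((real (card X) + 1) / (real (card X) - 1)))"
proof -
  note fX = assms(1) and fY = assms(2) and n2 = assms(3) and mY = assms(4) and ch = assms(5)
    and pp = assms(6) and ps = assms(7) and op = assms(8)
  define n where "n = card X"
  define m where "m = card Y"
  let ?o = "out_prob X p W"
  have m0: "m > 0" using mY unfolding m_def by simp
  have so: "(\<Sum>y\<in>Y. ?o y) = 1"
  proof -
    have "(\<Sum>y\<in>Y. ?o y) = (\<Sum>x\<in>X. p x * (\<Sum>y\<in>Y. W x y))"
      unfolding out_prob_def by (subst sum.swap) (simp add: sum_distrib_left)
    also have "\<dots> = (\<Sum>x\<in>X. p x)" using ch unfolding is_channel_def by simp
    finally show ?thesis using ps by simp
  qed
  define L where "L = {y\<in>Y. ?o y \<le> 2 / real m}"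
  have LY: "L \<subseteq> Y" unfolding L_def by auto
  have fL: "finite L" using fY LY by (metis finite_subset)
  have cL: "m < 2 * card L"
  proof -
    let ?H = "Y - L"
    have cH: "2 * card ?H < m"
    proof (cases "?H = {}")
      case True thus ?thesis using m0 by (simp only: card.empty)
    next
      case False
      have fH: "finite ?H" using fY by simp
      have "(\<Sum>y\<in>?H. 2 / real m) < (\<Sum>y\<in>?H. ?o y)"
        using False fH by (intro sum_strict_mono) (auto simp: L_def)
      also have "\<dots> \<le> (\<Sum>y\<in>Y. ?o y)" using fY op by (intro sum_mono2) auto
      finally have "real (card ?H) * (2 / real m) < 1" using so by simp
      hence "real (2 * card ?H) < real m" using m0 by (simp add: field_simps)
      thus ?thesis by linarith
    qed
    have "card Y = card L + card ?H" using fY LY by (metis card_Diff_subset finite_subset le_add_diff_inverse card_mono)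
    thus ?thesis using cH unfolding m_def by linarith
  qed
  have pw: "0 \<le> p x * W x y" if "y \<in> Y" "x \<in> X" for x y
  proof -
    have "0 \<le> p x" "0 \<le> W x y" using pp ch that unfolding is_channel_def by auto
    thus ?thesis by simp
  qed
  define u where "u y x = sqrt (p x * W x y / ?o y)" for y x
  have unn: "\<forall>y\<in>L. \<forall>x\<in>X. u y x \<ge> 0"
    using LY pw op unfolding u_def by (auto intro!: divide_nonneg_pos)
  have usq: "\<forall>y\<in>L. (\<Sum>x\<in>X. (u y x)^2) = 1"
  proof
    fix y assume y: "y \<in> L"
    hence yY: "y \<in> Y" using LY by auto
    have "(\<Sum>x\<in>X. (u y x)^2) = (\<Sum>x\<in>X. p x * W x y / ?o y)"
      using yY pw op unfolding u_def by (intro sum.cong) (auto intro!: divide_nonneg_pos)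
    also have "\<dots> = (\<Sum>x\<in>X. p x * W x y) / ?o y" by (rule sum_divide_distrib[symmetric])
    also have "\<dots> = ?o y / ?o y" by (simp add: out_prob_def)
    also have "\<dots> = 1" using op yY by (metis divide_self less_irrefl)
    finally show "(\<Sum>x\<in>X. (u y x)^2) = 1" .
  qed
  define SN where "SN = {N::nat. N \<ge> 1 \<and> n * N^(n-1) < card L}"
  have 1: "1 \<in> SN" unfolding SN_def using cL mY unfolding m_def n_def by simp
  have bdd: "N \<le> card L" if "N \<in> SN" for N
  proof -
    have "N \<le> N^(n-1)" using that n2 unfolding SN_def n_def by (simp add: self_le_power)
    also have "\<dots> \<le> n * N^(n-1)" using n2 unfolding n_def by simp
    finally show ?thesis using that unfolding SN_def by simp
  qed
  have fSN: "finite SN" using bdd by (meson finite_atMost finite_subset atMost_iff subsetI)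
  define N where "N = Max SN"
  have NS: "N \<in> SN" unfolding N_def using fSN 1 by (intro Max_in) auto
  have N1S: "Suc N \<notin> SN" using fSN unfolding N_def by (metis Max_ge Suc_n_not_le_n)
  have N1: "N \<ge> 1" and NL: "n * N^(n-1) < card L" using NS unfolding SN_def by auto
  have NL2: "card L \<le> n * (Suc N)^(n-1)" using N1S unfolding SN_def by auto
  obtain \<alpha> \<beta> where ab: "\<alpha> \<in> L" "\<beta> \<in> L" "\<alpha> \<noteq> \<beta>"
    and close: "(\<Sum>x\<in>X. (u \<alpha> x - u \<beta> x)^2) \<le> real n * (real n - 1) * (1 / real N)^2"
    using pigeon[OF fX fL N1 NL[unfolded n_def] unn usq] unfolding n_def by blast
  have abY: "\<alpha> \<in> Y" "\<beta> \<in> Y" using ab LY by auto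
  have osum: "?o \<alpha> + ?o \<beta> \<le> 4 / real m" using ab unfolding L_def by auto
  have "mutual_info X Y p W - mutual_info X (merged_alphabet Y \<alpha> \<beta>) p (merge_channel W \<alpha> \<beta>)
     \<le> 2*(?o \<alpha> + ?o \<beta>) * (\<Sum>x\<in>X. (u \<alpha> x - u \<beta> x)^2)"
    using mi_diff[OF fX fY ch pp op abY ab(3)] unfolding u_def .
  also have "\<dots> \<le> 2*(4 / real m) * (real n * (real n - 1) * (1 / real N)^2)"
  proof -
    have "0 < ?o \<alpha>" "0 < ?o \<beta>" using op abY by auto
    thus ?thesis using osum close n2 unfolding n_def
      by (intro mult_mono) (auto intro!: sum_nonneg)
  qed
  also have "\<dots> = 8 * real n * (real n - 1) / (real m * (real N)^2)" by (simp add: field_simps)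
  also have "\<dots> \<le> mu_const n * real m powr (- ((real n + 1) / (real n - 1)))"
  proof (rule numeric)
    show "2 \<le> n" using n2 unfolding n_def .
    show "0 < m" by (rule m0)
    show "1 \<le> N" by (rule N1)
    have "real m < 2 * real (card L)" using cL by linarith
    also have "\<dots> \<le> 2 * real (n * (Suc N)^(n-1))" using NL2 by linarith
    finally show "real m < 2 * real n * (real N + 1)^(n-1)" by (simp add: add.commute mult.assoc)
  qed
  finally show ?thesis using abY ab(3) unfolding n_def m_def by blast
qed

end
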